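(* Let $\mathfrak{R}=(G,G',S,\phi,\rho,\delta)$ be a reconciliation and $x,y\in V(G')$ with $x<y$ and $\rho(x)=\rho(y)$. Then $y\in\Delta(\mathfrak{R})$.
   Context: All trees are rooted binary trees whose root node has degree 1; every other non-leaf node $x$ has exactly two children $x_l,x_r$. For nodes of a rooted tree, $y\le x$ means $x$ lies on the path from $y$ to the root; $y<x$ means $y\le x$, $y\ne x$. $G$ is a gene tree, $S$ a species tree, $\phi:L(G)\to L(S)$. A tree $G'$ is an extension of $G$ if $G$ is obtained from $G'$ by pruning some subtrees and suppressing degree-2 nodes. A map $\rho:V(G')\to V(S)$ is consistent with $S$ if $\rho(root(G'))=root(S)$ and every node $x$ of $G'$ with two children satisfies (D) $\rho(x)=\rho(x_l)=\rho(x_r)$ or (S) $\rho(x)_l=\rho(x_l)$ and $\rho(x)_r=\rho(x_r)$. A reconciliation $(G,G',S,\phi,\rho,\delta)$ consists of an extension $G'$ of $G$, a consistent $\rho$ with $\rho|_{L(G)}=\phi$, and an injective partial function $\delta$ from duplications to losses ($L(G')\setminus L(G)$) with $\rho(x)=\rho(\delta(x))$. $\Delta(\mathfrak{R})$ (duplications) is the set of nodes with two children satisfying (D). *)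

theory Defs
  imports Main
begin

record 'a rtree =
  nodes :: "'a set"
  rt :: 'a
  chl :: "'a \<Rightarrow> 'a list"

definition child_rel :: "('a, 'z) rtree_scheme \<Rightarrow> ('a \<times> 'a) set" where
  "child_rel T = {(p, c). p \<in> nodes T \<and> c \<in> set (chl T p)}"

text \<open>tle T y x means y \<le> x: x lies on the path from y to the root.\<close>
definition tle :: "('a, 'z) rtree_scheme \<Rightarrow> 'a \<Rightarrow> 'a \<Rightarrow> bool" where
  "tle T y x \<longleftrightarrow> x \<in> nodes T \<and> y \<in> nodes T \<and> (x, y) \<in> (child_rel T)\<^sup>*"

definition tless :: "('a, 'z) rtree_scheme \<Rightarrow> 'a \<Rightarrow> 'a \<Rightarrow> bool" where
  "tless T y x \<longleftrightarrow> tle T y x \<and> y \<noteq> x"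

definition leaves :: "('a, 'z) rtree_scheme \<Rightarrow> 'a set" where
  "leaves T = {v \<in> nodes T. chl T v = []}"

definition rooted_tree :: "('a, 'z) rtree_scheme \<Rightarrow> bool" where
  "rooted_tree T \<longleftrightarrow>
     finite (nodes T) \<and> rt T \<in> nodes T \<and>
     (\<forall>v\<in>nodes T. set (chl T v) \<subseteq> nodes T \<and> distinct (chl T v)) \<and>
     (\<forall>v\<in>nodes T. (rt T, v) \<in> (child_rel T)\<^sup>*) \<and>
     (\<forall>v\<in>nodes T. rt T \<notin> set (chl T v)) \<and>
     (\<forall>u\<in>nodes T. \<forall>w\<in>nodes T. \<forall>v. v \<in> set (chl T u) \<and> v \<in> set (chl T w) \<longrightarrow> u = w)"

definition binary_tree :: "('a, 'z) rtree_scheme \<Rightarrow> bool" where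
  "binary_tree T \<longleftrightarrow> rooted_tree T \<and> length (chl T (rt T)) = 1 \<and>
     (\<forall>v\<in>nodes T - {rt T}. length (chl T v) = 0 \<or> length (chl T v) = 2)"

text \<open>Pruning all subtrees that contain no leaf of K and suppressing degree-2 nodes.\<close>
definition hasK :: "('a, 'z) rtree_scheme \<Rightarrow> 'a set \<Rightarrow> 'a \<Rightarrow> bool" where
  "hasK T K v \<longleftrightarrow> (\<exists>l\<in>K. tle T l v)"

definition pruned_nodes :: "('a, 'z) rtree_scheme \<Rightarrow> 'a set \<Rightarrow> 'a set" where
  "pruned_nodes T K = {rt T} \<union> K \<union>
     {v \<in> nodes T. length (chl T v) = 2 \<and> (\<forall>c\<in>set (chl T v). hasK T K c)}"

definition top_below :: "('a, 'z) rtree_scheme \<Rightarrow> 'a set \<Rightarrow> 'a \<Rightarrow> 'a" where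
  "top_below T K c = (THE u. u \<in> pruned_nodes T K \<and> tle T u c \<and>
       (\<forall>w\<in>pruned_nodes T K. tle T w c \<longrightarrow> tle T w u))"

definition pruned_chl :: "('a, 'z) rtree_scheme \<Rightarrow> 'a set \<Rightarrow> 'a \<Rightarrow> 'a list" where
  "pruned_chl T K v = map (top_below T K) (filter (hasK T K) (chl T v))"

text \<open>G' is an extension of G: G is (isomorphic, fixing the kept leaves, to) the tree obtained
  from G' by keeping the leaves K, pruning everything else and suppressing degree-2 nodes.\<close>
definition is_extension :: "'a rtree \<Rightarrow> 'a rtree \<Rightarrow> bool" where
  "is_extension G' G \<longleftrightarrow>
     (\<exists>K f. K \<subseteq> leaves G' \<and> K \<noteq> {} \<and>
        bij_betw f (pruned_nodes G' K) (nodes G) \<and> f (rt G') = rt G \<and>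
        (\<forall>l\<in>K. f l = l) \<and>
        (\<forall>v\<in>pruned_nodes G' K. set (chl G (f v)) = f ` set (pruned_chl G' K v)))"

text \<open>Conditions (D) and (S) at a node x with two children x_l = chl x ! 0, x_r = chl x ! 1.
  The labelling of children is immaterial, so (S) asks that the two children of rho(x)
  are exactly rho(x_l), rho(x_r).\<close>
definition condD :: "'a rtree \<Rightarrow> ('a \<Rightarrow> 'b) \<Rightarrow> 'a \<Rightarrow> bool" where
  "condD G' \<rho> x \<longleftrightarrow> \<rho> x = \<rho> (chl G' x ! 0) \<and> \<rho> x = \<rho> (chl G' x ! 1)"

definition condS :: "'a rtree \<Rightarrow> 'b rtree \<Rightarrow> ('a \<Rightarrow> 'b) \<Rightarrow> 'a \<Rightarrow> bool" where
  "condS G' S \<rho> x \<longleftrightarrow> length (chl S (\<rho> x)) = 2 \<and>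
     set (chl S (\<rho> x)) = {\<rho> (chl G' x ! 0), \<rho> (chl G' x ! 1)}"

definition consistent :: "'a rtree \<Rightarrow> 'b rtree \<Rightarrow> ('a \<Rightarrow> 'b) \<Rightarrow> bool" where
  "consistent G' S \<rho> \<longleftrightarrow> \<rho> (rt G') = rt S \<and> (\<forall>x\<in>nodes G'. \<rho> x \<in> nodes S) \<and>
     (\<forall>x\<in>nodes G'. length (chl G' x) = 2 \<longrightarrow> condD G' \<rho> x \<or> condS G' S \<rho> x)"

definition dups :: "'a rtree \<Rightarrow> ('a \<Rightarrow> 'b) \<Rightarrow> 'a set" where
  "dups G' \<rho> = {x \<in> nodes G'. length (chl G' x) = 2 \<and> condD G' \<rho> x}"

definition reconciliation ::
  "'a rtree \<Rightarrow> 'a rtree \<Rightarrow> 'b rtree \<Rightarrow> ('a \<Rightarrow> 'b) \<Rightarrow> ('a \<Rightarrow> 'b) \<Rightarrow> ('a \<Rightarrow> 'a option) \<Rightarrow> bool" where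
  "reconciliation G G' S \<phi> \<rho> \<delta> \<longleftrightarrow>
     binary_tree G \<and> binary_tree G' \<and> binary_tree S \<and>
     (\<forall>l\<in>leaves G. \<phi> l \<in> leaves S) \<and>
     is_extension G' G \<and> consistent G' S \<rho> \<and>
     (\<forall>l\<in>leaves G. \<rho> l = \<phi> l) \<and>
     dom \<delta> \<subseteq> dups G' \<rho> \<and> inj_on \<delta> (dom \<delta>) \<and>
     ran \<delta> \<subseteq> leaves G' - leaves G \<and>
     (\<forall>x z. \<delta> x = Some z \<longrightarrow> \<rho> x = \<rho> z)"

end

theory Submission
  imports Defs
begin

lemma two_cases: "x \<in> set l \<Longrightarrow> length l = 2 \<Longrightarrow> x = l!0 \<or> x = l!(1::nat)"
  by (auto simp: in_set_conv_nth less_Suc_eq numeral_2_eq_2)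

lemma tree_acyclic:
  assumes "rooted_tree T" "v \<in> nodes T"
  shows "(v, v) \<notin> (child_rel T)\<^sup>+"
proof -
  have "(rt T, v) \<in> (child_rel T)\<^sup>*" using assms unfolding rooted_tree_def by blast
  then show ?thesis
  proof (induction rule: rtrancl_induct)
    case base
    show ?case
    proof
      assume "(rt T, rt T) \<in> (child_rel T)\<^sup>+"
      then obtain p where "(p, rt T) \<in> child_rel T" by (meson tranclD2)
      then show False using assms(1) unfolding rooted_tree_def child_rel_def by auto
    qed
  next
    case (step v w)
    show ?case
    proof
      assume "(w, w) \<in> (child_rel T)\<^sup>+"
      then obtain p where p1: "(w, p) \<in> (child_rel T)\<^sup>*" and p2: "(p, w) \<in> child_rel T"
        by (meson tranclD2)
      have uq: "\<forall>u\<in>nodes T. \<forall>w\<in>nodes T. \<forall>v. v \<in> set (chl T u) \<and> v \<in> set (chl T w) \<longrightarrow> u = w"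
        using assms(1) unfolding rooted_tree_def by blast
      have "p \<in> nodes T" "w \<in> set (chl T p)" "v \<in> nodes T" "w \<in> set (chl T v)"
        using step(2) p2 unfolding child_rel_def by auto
      then have "p = v" using uq[rule_format, of p v w] by blast
      then have "(v, v) \<in> (child_rel T)\<^sup>+" using step(2) p1
        by (meson rtrancl_into_trancl2)
      then show False using step(3) by blast
    qed
  qed
qed

lemma not_below_root:
  assumes "rooted_tree T" "(c, p) \<in> (child_rel T)\<^sup>*" "p = rt T"
  shows "c = rt T"
  using assms(2)
proof (cases rule: rtranclE)
  case (step q)
  then show ?thesis using assms(1,3) unfolding rooted_tree_def child_rel_def by auto
qed (use assms in auto)

lemma mono_rho:
  assumes "binary_tree G'" "consistent G' S \<rho>"
    and "(c, x) \<in> (child_rel G')\<^sup>*" "c \<noteq> rt G'"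
  shows "(\<rho> c, \<rho> x) \<in> (child_rel S)\<^sup>*"
  using assms(3)
proof (induction rule: rtrancl_induct)
  case base then show ?case by simp
next
  case (step p x)
  have rt: "rooted_tree G'" using assms(1) unfolding binary_tree_def by blast
  have pn: "p \<noteq> rt G'" using not_below_root[OF rt step(1)] assms(4) by blast
  have pN: "p \<in> nodes G'" and xc: "x \<in> set (chl G' p)" using step(2) unfolding child_rel_def by auto
  have "length (chl G' p) = 0 \<or> length (chl G' p) = 2" using assms(1) pn pN unfolding binary_tree_def by simp
  then have lp: "length (chl G' p) = 2" using xc by auto
  have xs: "x = chl G' p ! 0 \<or> x = chl G' p ! 1" by (rule two_cases[OF xc lp])
  have "condD G' \<rho> p \<or> condS G' S \<rho> p" using assms(2) pN \<open>length (chl G' p) = 2\<close>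
    unfolding consistent_def by blast
  then have "\<rho> x = \<rho> p \<or> (\<rho> p, \<rho> x) \<in> child_rel S"
  proof
    assume "condD G' \<rho> p" then show ?thesis using xs unfolding condD_def by auto
  next
    assume "condS G' S \<rho> p"
    moreover have "\<rho> p \<in> nodes S" using assms(2) pN unfolding consistent_def by blast
    ultimately show ?thesis using xs unfolding condS_def child_rel_def by auto
  qed
  then show ?case using step(3) by (metis rtrancl.rtrancl_into_rtrancl)
qed

lemma stay_root:
  assumes "binary_tree G'" "binary_tree S" "consistent G' S \<rho>"
    and "(c, x) \<in> (child_rel G')\<^sup>*" "c \<noteq> rt G'" "\<rho> c = rt S"
  shows "\<rho> x = rt S"
  using assms(4)
proof (induction rule: rtrancl_induct)
  case base then show ?case using assms(6) by simp
next
  case (step p x)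
  have rt: "rooted_tree G'" using assms(1) unfolding binary_tree_def by blast
  have pn: "p \<noteq> rt G'" using not_below_root[OF rt step(1)] assms(5) by blast
  have pN: "p \<in> nodes G'" and xc: "x \<in> set (chl G' p)" using step(2) unfolding child_rel_def by auto
  have "length (chl G' p) = 0 \<or> length (chl G' p) = 2" using assms(1) pn pN unfolding binary_tree_def by simp
  then have lp: "length (chl G' p) = 2" using xc by auto
  have xs: "x = chl G' p ! 0 \<or> x = chl G' p ! 1" by (rule two_cases[OF xc lp])
  have "condD G' \<rho> p \<or> condS G' S \<rho> p" using assms(3) pN \<open>length (chl G' p) = 2\<close>
    unfolding consistent_def by blast
  moreover have "\<not> condS G' S \<rho> p" using step(3) assms(2)
    unfolding condS_def binary_tree_def by auto
  ultimately show ?case using xs step(3) unfolding condD_def by auto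
qed

theorem lemma4:
  fixes G G' :: "'a rtree" and S :: "'b rtree"
    and \<phi> \<rho> :: "'a \<Rightarrow> 'b" and \<delta> :: "'a \<Rightarrow> 'a option" and x y :: 'a
  assumes "reconciliation G G' S \<phi> \<rho> \<delta>"
    and "x \<in> nodes G'" and "y \<in> nodes G'"
    and "tless G' x y"
    and "\<rho> x = \<rho> y"
  shows "y \<in> dups G' \<rho>"
proof -
  have bG': "binary_tree G'" and bS: "binary_tree S" and cons: "consistent G' S \<rho>"
    and bG: "binary_tree G"
    and ext: "is_extension G' G" and lf: "\<forall>l\<in>leaves G. \<rho> l = \<phi> l"
    and phl: "\<forall>l\<in>leaves G. \<phi> l \<in> leaves S"
    using assms(1) unfolding reconciliation_def by auto
  have rG': "rooted_tree G'" using bG' unfolding binary_tree_def by blast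
  have rS: "rooted_tree S" using bS unfolding binary_tree_def by blast
  have yx: "(y, x) \<in> (child_rel G')\<^sup>*" and xy: "x \<noteq> y"
    using assms(4) unfolding tless_def tle_def by auto
  then obtain c where yc: "(y, c) \<in> child_rel G'" and cx: "(c, x) \<in> (child_rel G')\<^sup>*"
    using converse_rtranclE[OF yx] by metis
  have cc: "c \<in> set (chl G' y)" using yc unfolding child_rel_def by auto
  have cN: "c \<noteq> rt G'" using cc rG' assms(3) unfolding rooted_tree_def by blast
  show ?thesis
  proof (cases "y = rt G'")
    case False
    have "length (chl G' y) = 0 \<or> length (chl G' y) = 2" using bG' False assms(3) unfolding binary_tree_def by simp
    then have len: "length (chl G' y) = 2" using cc by auto
    have cs: "c = chl G' y ! 0 \<or> c = chl G' y ! 1" by (rule two_cases[OF cc len])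
    have "condD G' \<rho> y \<or> condS G' S \<rho> y" using cons assms(3) len
      unfolding consistent_def by blast
    moreover have "\<not> condS G' S \<rho> y"
    proof
      assume cS: "condS G' S \<rho> y"
      have "\<rho> y \<in> nodes S" using cons assms(3) unfolding consistent_def by blast
      then have e: "(\<rho> y, \<rho> c) \<in> child_rel S" using cS cs unfolding condS_def child_rel_def by auto
      have "(\<rho> c, \<rho> x) \<in> (child_rel S)\<^sup>*" using mono_rho[OF bG' cons cx cN] .
      then have "(\<rho> y, \<rho> y) \<in> (child_rel S)\<^sup>+" using e assms(5)
        by (metis rtrancl_into_trancl2)
      then show False using tree_acyclic[OF rS \<open>\<rho> y \<in> nodes S\<close>] by blast
    qed
    ultimately show ?thesis unfolding dups_def using assms(3) len by blast
  next
    case True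
    have rho_c: "\<rho> c = rt S"
    proof -
      have "(\<rho> c, \<rho> x) \<in> (child_rel S)\<^sup>*" using mono_rho[OF bG' cons cx cN] .
      moreover have "\<rho> x = rt S" using assms(5) True cons unfolding consistent_def by simp
      ultimately show ?thesis using not_below_root[OF rS] by blast
    qed
    obtain K f where K: "K \<subseteq> leaves G'" "K \<noteq> {}"
      and bij: "bij_betw f (pruned_nodes G' K) (nodes G)"
      and fK: "\<forall>l\<in>K. f l = l"
      and fch: "\<forall>v\<in>pruned_nodes G' K. set (chl G (f v)) = f ` set (pruned_chl G' K v)"
      using ext unfolding is_extension_def by blast
    obtain l where lK: "l \<in> K" using K(2) by blast
    have lP: "l \<in> pruned_nodes G' K" using lK unfolding pruned_nodes_def by blast
    have lG': "l \<in> nodes G'" "chl G' l = []" using K(1) lK unfolding leaves_def by auto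
    have "l \<in> nodes G" using bij lP fK lK by (metis bij_betw_apply)
    moreover have "chl G l = []" using fch lP fK lK lG'(2) unfolding pruned_chl_def by auto
    ultimately have lL: "l \<in> leaves G" unfolding leaves_def by blast
    have "(rt G', l) \<in> (child_rel G')\<^sup>*" using rG' lG'(1) unfolding rooted_tree_def by blast
    moreover have "l \<noteq> rt G'" using bG' lG'(2) unfolding binary_tree_def by auto
    ultimately obtain c' where c'1: "(rt G', c') \<in> child_rel G'" and c'2: "(c', l) \<in> (child_rel G')\<^sup>*"
      using converse_rtranclE[of "rt G'" l] by metis
    have "length (chl G' (rt G')) = 1" using bG' unfolding binary_tree_def by blast
    then have "c' = c" using c'1 cc True unfolding child_rel_def
      by (auto simp: length_Suc_conv)
    then have "\<rho> l = rt S" using stay_root[OF bG' bS cons _ cN rho_c] c'2 by blast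
    moreover have "\<rho> l \<in> leaves S" using lf phl lL by auto
    ultimately show ?thesis using bS unfolding binary_tree_def leaves_def by auto
  qed
qed

end
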